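(* Let $p \in [0,1]$, $q=1-p$, and let $m, n \geq 1$ be integers. If $X$ is a $\mathrm{Bin}(n, p)$ random variable, then \[ \mathbb{E} |X - np|^{2m} \leq m \max\left(m^{2m-1} npq,\ e^{m-1}(m npq)^m\right). \] In particular, if $Z = X/n$, $\delta\in(0,1]$ and $n \geq 4m/\delta$, then \[ \mathbb{E} |Z - p|^{2m} \leq \delta^m (pq)^m + \delta^{2m-1} pq. \] *)

theory Defs
  imports "HOL-Probability.Probability"
begin

end

theory Submission
  imports Defs
begin


definition G :: "nat \<Rightarrow> real \<Rightarrow> real" where
  "G k x = (\<Sum>j\<le>k div 2. real j ^ k / fact j * x ^ j)"

lemma pow_lin:
  fixes x s :: real assumes "x \<ge> 0" "s \<ge> 0"
  shows "x ^ j + real j * s * x ^ (j - 1) \<le> (x + s) ^ j"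
proof (induction j)
  case 0 then show ?case by simp
next
  case (Suc j)
  have "(x+s)^Suc j = (x+s) * (x+s)^j" by simp
  also have "\<dots> \<ge> (x+s) * (x ^ j + real j * s * x ^ (j - 1))"
    using Suc assms by (intro mult_left_mono) auto
  finally have h: "(x+s) * (x ^ j + real j * s * x ^ (j - 1)) \<le> (x+s)^Suc j" .
  have "x ^ Suc j + real (Suc j) * s * x ^ (Suc j - 1) \<le> (x+s) * (x ^ j + real j * s * x ^ (j - 1))"
  proof (cases j)
    case 0 then show ?thesis by simp
  next
    case (Suc i)
    then show ?thesis using assms by (simp add: algebra_simps)
  qed
  then show ?case using h by linarith
qed

lemma G_nonneg: "x \<ge> 0 \<Longrightarrow> G k x \<ge> 0"
  unfolding G_def by (intro sum_nonneg) auto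

lemma D_bound:
  fixes x :: real assumes "x \<ge> 0"
  shows "(\<Sum>i\<le>k. if i < 2 then 0 else real (k choose i) * G (k - i) x)
         \<le> (\<Sum>j<k div 2. real (Suc j) ^ k / fact j * x ^ j)"
proof -
  have "(\<Sum>i\<le>k. if i < 2 then 0 else real (k choose i) * G (k - i) x)
     \<le> (\<Sum>i\<le>k. if i < 2 then 0 else real (k choose i) * (\<Sum>j<k div 2. real j ^ (k-i) / fact j * x ^ j))"
  proof (intro sum_mono)
    fix i assume i: "i \<in> {..k}"
    show "(if i < 2 then 0 else real (k choose i) * G (k - i) x)
       \<le> (if i < 2 then 0 else real (k choose i) * (\<Sum>j<k div 2. real j ^ (k-i) / fact j * x ^ j))"
    proof (cases "i < 2")
      case False
      have "{..(k-i) div 2} \<subseteq> {..<k div 2}" using False i by auto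
      hence "G (k - i) x \<le> (\<Sum>j<k div 2. real j ^ (k-i) / fact j * x ^ j)"
        unfolding G_def using assms by (intro sum_mono2) auto
      then show ?thesis using False by (simp add: mult_left_mono)
    qed simp
  qed
  also have "\<dots> = (\<Sum>i\<le>k. \<Sum>j<k div 2. (if i < 2 then 0 else real (k choose i) * real j ^ (k-i)) * (x ^ j / fact j))"
    by (intro sum.cong refl) (auto simp: sum_distrib_left mult_ac intro!: sum.cong)
  also have "\<dots> = (\<Sum>j<k div 2. \<Sum>i\<le>k. (if i < 2 then 0 else real (k choose i) * real j ^ (k-i)) * (x ^ j / fact j))"
    by (rule sum.swap)
  also have "\<dots> = (\<Sum>j<k div 2. (\<Sum>i\<le>k. (if i < 2 then 0 else real (k choose i) * real j ^ (k-i))) * (x ^ j / fact j))"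
    by (simp only: sum_distrib_right)
  also have "\<dots> \<le> (\<Sum>j<k div 2. (\<Sum>i\<le>k. real (k choose i) * 1 ^ i * real j ^ (k-i)) * (x ^ j / fact j))"
    using assms by (intro sum_mono mult_right_mono) auto
  also have "\<dots> = (\<Sum>j<k div 2. real (Suc j) ^ k / fact j * x ^ j)"
  proof (intro sum.cong refl)
    fix j
    have "(\<Sum>i\<le>k. real (k choose i) * 1 ^ i * real j ^ (k-i)) = (1 + real j) ^ k"
      by (rule binomial_ring[symmetric])
    then show "(\<Sum>i\<le>k. real (k choose i) * 1 ^ i * real j ^ (k-i)) * (x ^ j / fact j) = real (Suc j) ^ k / fact j * x ^ j"
      by (simp add: add.commute)
  qed
  finally show ?thesis .
qed

lemma G_step:
  fixes x s :: real assumes "x \<ge> 0" "s \<ge> 0"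
  shows "G k x + s * (\<Sum>i\<le>k. if i < 2 then 0 else real (k choose i) * G (k - i) x) \<le> G k (x + s)"
proof -
  have "G k x + s * (\<Sum>i\<le>k. if i < 2 then 0 else real (k choose i) * G (k - i) x)
      \<le> G k x + s * (\<Sum>j<k div 2. real (Suc j) ^ k / fact j * x ^ j)"
    using D_bound[OF assms(1)] assms by (intro add_left_mono mult_left_mono) auto
  also have "(\<Sum>j<k div 2. real (Suc j) ^ k / fact j * x ^ j)
      = (\<Sum>j\<le>k div 2. real j ^ k / fact j * (real j * x ^ (j - 1)))"
  proof -
    have "(\<Sum>j\<le>k div 2. real j ^ k / fact j * (real j * x ^ (j - 1)))
        = (\<Sum>j<Suc (k div 2). real j ^ k / fact j * (real j * x ^ (j - 1)))"
      by (simp add: lessThan_Suc_atMost)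
    also have "\<dots> = (\<Sum>j<k div 2. real (Suc j) ^ k / fact (Suc j) * (real (Suc j) * x ^ j))"
      by (subst sum.lessThan_Suc_shift) simp
    also have "\<dots> = (\<Sum>j<k div 2. real (Suc j) ^ k / fact j * x ^ j)"
    proof (intro sum.cong refl)
      fix j
      have f: "fact j > (0::real)" by simp
      have "real (Suc j) ^ k / fact (Suc j) * (real (Suc j) * x ^ j)
          = real (Suc j) ^ k / (real (Suc j) * fact j) * (real (Suc j) * x ^ j)"
        by (simp only: fact_Suc of_nat_mult)
      also have "\<dots> = real (Suc j) ^ k / fact j * x ^ j"
        using f by (simp add: field_simps del: of_nat_Suc)
      finally show "real (Suc j) ^ k / fact (Suc j) * (real (Suc j) * x ^ j) = real (Suc j) ^ k / fact j * x ^ j" .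
    qed
    finally show ?thesis by simp
  qed
  also have "G k x + s * (\<Sum>j\<le>k div 2. real j ^ k / fact j * (real j * x ^ (j - 1)))
      = (\<Sum>j\<le>k div 2. real j ^ k / fact j * (x ^ j + real j * s * x ^ (j - 1)))"
    unfolding G_def by (simp add: sum_distrib_left sum.distrib[symmetric] algebra_simps)
  also have "\<dots> \<le> G k (x + s)"
    unfolding G_def using pow_lin[OF assms] by (intro sum_mono mult_left_mono) auto
  finally show ?thesis .
qed



definition Em :: "real \<Rightarrow> nat \<Rightarrow> (nat \<Rightarrow> real) \<Rightarrow> real" where
  "Em p n f = (\<Sum>k\<le>n. real (n choose k) * p ^ k * (1 - p) ^ (n - k) * f k)"

lemma Em_Suc: "Em p (Suc n) f = p * Em p n (\<lambda>k. f (Suc k)) + (1 - p) * Em p n f"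
proof -
  define g where "g k = real (Suc n choose k) * p ^ k * (1 - p) ^ (Suc n - k) * f k" for k
  have "Em p (Suc n) f = g 0 + (\<Sum>j\<le>n. g (Suc j))"
    unfolding Em_def g_def by (subst sum.atMost_Suc_shift) simp
  also have "(\<Sum>j\<le>n. g (Suc j)) = (\<Sum>j\<le>n. real (n choose j) * p ^ Suc j * (1 - p) ^ (n - j) * f (Suc j))
      + (\<Sum>j\<le>n. real (n choose Suc j) * p ^ Suc j * (1 - p) ^ (Suc n - Suc j) * f (Suc j))"
    unfolding g_def by (simp add: sum.distrib[symmetric] algebra_simps)
  also have "(\<Sum>j\<le>n. real (n choose j) * p ^ Suc j * (1 - p) ^ (n - j) * f (Suc j)) = p * Em p n (\<lambda>k. f (Suc k))"
    unfolding Em_def by (simp add: sum_distrib_left algebra_simps)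
  also have "(\<Sum>k\<le>Suc n. real (n choose k) * p ^ k * (1 - p) ^ (Suc n - k) * f k)
     = real (n choose 0) * p ^ 0 * (1 - p) ^ (Suc n - 0) * f 0 + (\<Sum>j\<le>n. real (n choose Suc j) * p ^ Suc j * (1 - p) ^ (Suc n - Suc j) * f (Suc j))"
    by (rule sum.atMost_Suc_shift)
  hence "g 0 + (p * Em p n (\<lambda>k. f (Suc k)) + (\<Sum>j\<le>n. real (n choose Suc j) * p ^ Suc j * (1 - p) ^ (Suc n - Suc j) * f (Suc j)))
     = p * Em p n (\<lambda>k. f (Suc k)) + (\<Sum>k\<le>Suc n. real (n choose k) * p ^ k * (1 - p) ^ (Suc n - k) * f k)"
    unfolding g_def by simp
  also have "(\<Sum>k\<le>Suc n. real (n choose k) * p ^ k * (1 - p) ^ (Suc n - k) * f k)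
      = (\<Sum>k\<le>n. real (n choose k) * p ^ k * (1 - p) ^ (Suc n - k) * f k)"
    by simp
  also have "\<dots> = (1 - p) * Em p n f"
    unfolding Em_def sum_distrib_left
    by (intro sum.cong refl) (simp add: Suc_diff_le algebra_simps)
  finally show ?thesis .
qed

lemma Em_sum: "Em p n (\<lambda>k. \<Sum>i\<in>I. g i k) = (\<Sum>i\<in>I. Em p n (g i))"
  unfolding Em_def by (simp add: sum_distrib_left sum.swap[of _ I])

lemma Em_cmult: "Em p n (\<lambda>k. c * f k) = c * Em p n f"
  unfolding Em_def by (simp add: sum_distrib_left algebra_simps)

definition mom :: "real \<Rightarrow> nat \<Rightarrow> nat \<Rightarrow> real" where
  "mom p n k = Em p n (\<lambda>j. (real j - real n * p) ^ k)"

lemma mom_Suc: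
  "mom p (Suc n) k = (\<Sum>i\<le>k. real (k choose i) * (p * (1 - p) ^ i + (1 - p) * (- p) ^ i) * mom p n (k - i))"
proof -
  have "mom p (Suc n) k = p * Em p n (\<lambda>j. ((real j - real n * p) + (1 - p)) ^ k)
          + (1 - p) * Em p n (\<lambda>j. ((real j - real n * p) + (- p)) ^ k)"
    unfolding mom_def Em_Suc by (simp add: algebra_simps)
  also have "Em p n (\<lambda>j. ((real j - real n * p) + (1 - p)) ^ k)
     = (\<Sum>i\<le>k. real (k choose i) * (1 - p) ^ i * mom p n (k - i))"
  proof -
    have eq: "(\<lambda>j. ((real j - real n * p) + (1 - p)) ^ k) = (\<lambda>j. \<Sum>i\<le>k. (real (k choose i) * (1 - p) ^ i) * (real j - real n * p) ^ (k - i))"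
      by (rule ext, subst add.commute) (rule binomial_ring)
    show ?thesis
      unfolding mom_def eq Em_sum Em_cmult by simp
  qed
  also have "Em p n (\<lambda>j. ((real j - real n * p) + (- p)) ^ k)
     = (\<Sum>i\<le>k. real (k choose i) * (- p) ^ i * mom p n (k - i))"
  proof -
    have eq: "(\<lambda>j. ((real j - real n * p) + (- p)) ^ k) = (\<lambda>j. \<Sum>i\<le>k. (real (k choose i) * (- p) ^ i) * (real j - real n * p) ^ (k - i))"
      by (rule ext, subst add.commute) (rule binomial_ring)
    show ?thesis
      unfolding mom_def eq Em_sum Em_cmult by simp
  qed
  finally show ?thesis
    by (simp add: sum_distrib_left sum.distrib[symmetric] algebra_simps)
qed

lemma coef_bound:
  fixes p :: real
  assumes "0 \<le> p" "p \<le> 1" "i \<ge> 2"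
  shows "\<bar>p * (1 - p) ^ i + (1 - p) * (- p) ^ i\<bar> \<le> p * (1 - p)"
proof -
  define q where "q = 1 - p"
  have q1: "0 \<le> q" using assms unfolding q_def by simp
  have q2: "q \<le> 1" using assms unfolding q_def by simp
  note q = q1 q2
  obtain t where t: "i = Suc (Suc t)" using assms(3) by (metis add_2_eq_Suc le_Suc_ex)
  have h1: "\<bar>p * q ^ i + q * (- p) ^ i\<bar> \<le> p * q ^ i + q * p ^ i"
    using assms q by (auto simp: abs_mult power_abs intro: order.trans[OF abs_triangle_ineq])
  have "p * q ^ i + q * p ^ i = p * q * (q * q ^ t + p * p ^ t)" using t by (simp add: algebra_simps)
  also have "\<dots> \<le> p * q * (q + p)"
    using assms q by (intro mult_left_mono add_mono) (auto intro: mult_right_le_one_le power_le_one)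
  also have "\<dots> = p * q" unfolding q_def by simp
  finally show ?thesis using h1 unfolding q_def by linarith
qed

lemma mom_bound:
  fixes p :: real
  assumes p: "0 \<le> p" "p \<le> 1"
  shows "\<bar>mom p n k\<bar> \<le> G k (real n * (p * (1 - p)))"
proof (induction n arbitrary: k)
  case 0
  have "mom p 0 k = 0 ^ k" unfolding mom_def Em_def by simp
  moreover have "G k 0 = 0 ^ k" unfolding G_def by (cases k) (auto simp: power_0_left intro!: sum.neutral)
  ultimately show ?case by simp
next
  case (Suc n)
  define s where "s = p * (1 - p)"
  define x where "x = real n * s"
  have s0: "s \<ge> 0" using p unfolding s_def by simp
  have x0: "x \<ge> 0" using s0 unfolding x_def by simp
  have "\<bar>mom p (Suc n) k\<bar> \<le> (\<Sum>i\<le>k. \<bar>real (k choose i) * (p * (1 - p) ^ i + (1 - p) * (- p) ^ i) * mom p n (k - i)\<bar>)"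
    unfolding mom_Suc by (rule sum_abs)
  also have "\<dots> \<le> (\<Sum>i\<le>k. (if i = 0 then G k x else 0) + s * (if i < 2 then 0 else real (k choose i) * G (k - i) x))"
  proof (intro sum_mono)
    fix i assume "i \<in> {..k}"
    show "\<bar>real (k choose i) * (p * (1 - p) ^ i + (1 - p) * (- p) ^ i) * mom p n (k - i)\<bar>
        \<le> (if i = 0 then G k x else 0) + s * (if i < 2 then 0 else real (k choose i) * G (k - i) x)"
    proof (cases "i < 2")
      case True
      then consider "i = 0" | "i = 1" by linarith
      then show ?thesis
      proof cases
        case 1 then show ?thesis using Suc.IH[of k] unfolding x_def s_def by simp
      next
        case 2 then show ?thesis by (simp add: algebra_simps)
      qed
    next
      case False
      have c: "\<bar>p * (1 - p) ^ i + (1 - p) * (- p) ^ i\<bar> \<le> s"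
        unfolding s_def using coef_bound[OF p] False by simp
      have m: "\<bar>mom p n (k - i)\<bar> \<le> G (k - i) x" using Suc.IH[of "k - i"] unfolding x_def s_def .
      have "\<bar>real (k choose i) * (p * (1 - p) ^ i + (1 - p) * (- p) ^ i) * mom p n (k - i)\<bar>
          = real (k choose i) * (\<bar>p * (1 - p) ^ i + (1 - p) * (- p) ^ i\<bar> * \<bar>mom p n (k - i)\<bar>)"
        by (simp add: abs_mult)
      also have "\<dots> \<le> real (k choose i) * (s * G (k - i) x)"
        using c m s0 by (intro mult_left_mono mult_mono) auto
      finally show ?thesis using False by (simp add: mult.left_commute)
    qed
  qed
  also have "\<dots> = G k x + s * (\<Sum>i\<le>k. if i < 2 then 0 else real (k choose i) * G (k - i) x)"
    by (simp add: sum.distrib sum_distrib_left)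
  also have "\<dots> \<le> G k (x + s)" by (rule G_step[OF x0 s0])
  also have "x + s = real (Suc n) * (p * (1 - p))" unfolding x_def s_def by (simp add: algebra_simps)
  finally show ?case .
qed



lemma pow_fact_exp: "j \<ge> 1 \<Longrightarrow> real j ^ j / fact j \<le> exp (real j - 1)"
proof (induction j rule: dec_induct)
  case base then show ?case by simp
next
  case (step j)
  have j: "real j \<ge> 1" using step by simp
  have f: "fact j > (0::real)" by simp
  have "real (Suc j) ^ Suc j / fact (Suc j) = real (Suc j) ^ j / fact j"
    by (simp add: fact_Suc field_simps del: of_nat_Suc)
  also have "real (Suc j) ^ j = real j ^ j * (1 + 1 / real j) ^ j"
    using j by (simp add: power_mult_distrib[symmetric] field_simps)
  also have "(1 + 1 / real j) ^ j \<le> exp (1 / real j) ^ j"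
    using j by (intro power_mono) auto
  also have "exp (1 / real j) ^ j = exp 1"
    using j by (simp add: exp_of_nat_mult[symmetric])
  finally have "real (Suc j) ^ Suc j / fact (Suc j) \<le> real j ^ j * exp 1 / fact j"
    using f by (simp add: divide_right_mono mult_left_mono)
  also have "\<dots> = (real j ^ j / fact j) * exp 1" by simp
  also have "\<dots> \<le> exp (real j - 1) * exp 1" using step.IH by (intro mult_right_mono) auto
  also have "\<dots> = exp (real (Suc j) - 1)" by (simp add: exp_add[symmetric])
  finally show ?case .
qed

lemma term_bound:
  fixes x :: real assumes x: "x \<ge> 0" and j: "1 \<le> j" "j \<le> m"
  shows "real j ^ (2*m) / fact j * x ^ j \<le> max (real m ^ (2 * m - 1) * x) (exp (real m - 1) * (real m * x) ^ m)"
proof -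
  have m: "real m \<ge> 1" using j by simp
  define y where "y = exp 1 * x / real m"
  have y0: "y \<ge> 0" using x m unfolding y_def by simp
  have "real j ^ (2*m) = real j ^ j * real j ^ (2*m - j)" using j by (simp add: power_add[symmetric])
  also have "\<dots> \<le> real j ^ j * real m ^ (2*m - j)"
    using j by (intro mult_left_mono power_mono) auto
  finally have "real j ^ (2*m) / fact j * x ^ j \<le> real j ^ j * real m ^ (2*m - j) / fact j * x ^ j"
    using x by (intro mult_right_mono divide_right_mono) auto
  also have "\<dots> = (real j ^ j / fact j) * (real m ^ (2*m - j) * x ^ j)" by simp
  also have "\<dots> \<le> exp (real j - 1) * (real m ^ (2*m - j) * x ^ j)"
    using pow_fact_exp[OF j(1)] x by (intro mult_right_mono) auto
  also have "\<dots> = real m ^ (2*m - 1) * x * y ^ (j - 1)"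
  proof -
    have e: "exp (real j - 1) = exp 1 ^ (j - 1)" using j by (simp add: exp_of_nat_mult[symmetric] of_nat_diff)
    have mm: "real m ^ (2*m - 1) = real m ^ (2*m - j) * real m ^ (j - 1)" using j by (simp add: power_add[symmetric])
    have xx: "x ^ j = x * x ^ (j - 1)" using j by (simp add: power_Suc[symmetric])
    show ?thesis unfolding e mm xx y_def using m by (simp add: power_divide power_mult_distrib field_simps)
  qed
  also have "\<dots> \<le> max (real m ^ (2 * m - 1) * x) (exp (real m - 1) * (real m * x) ^ m)"
  proof (cases "y \<le> 1")
    case True
    have "y ^ (j - 1) \<le> 1" using True y0 by (simp add: power_le_one)
    hence "real m ^ (2*m - 1) * x * y ^ (j - 1) \<le> real m ^ (2*m - 1) * x"
      using x m by (intro mult_left_le) auto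
    then show ?thesis by simp
  next
    case False
    have "y ^ (j - 1) \<le> y ^ (m - 1)" using False j by (intro power_increasing) auto
    hence "real m ^ (2*m - 1) * x * y ^ (j - 1) \<le> real m ^ (2*m - 1) * x * y ^ (m - 1)"
      using x m by (intro mult_left_mono) auto
    also have "\<dots> = exp (real m - 1) * (real m * x) ^ m"
    proof -
      have e: "exp (real m - 1) = exp 1 ^ (m - 1)" using j by (simp add: exp_of_nat_mult[symmetric] of_nat_diff)
      have d: "2*m - 1 = m + (m - 1)" using j by simp
      have mm: "real m ^ (2*m - 1) = real m ^ m * real m ^ (m - 1)" unfolding d by (rule power_add)
      have xx: "x ^ m = x * x ^ (m - 1)" using j by (simp add: power_Suc[symmetric])
      show ?thesis unfolding e mm y_def power_mult_distrib xx using m by (simp add: power_divide field_simps)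
    qed
    finally show ?thesis by simp
  qed
  finally show ?thesis .
qed

lemma G_final:
  fixes x :: real assumes x: "x \<ge> 0" and m: "m \<ge> 1"
  shows "G (2*m) x \<le> real m * max (real m ^ (2 * m - 1) * x) (exp (real m - 1) * (real m * x) ^ m)"
proof -
  let ?M = "max (real m ^ (2 * m - 1) * x) (exp (real m - 1) * (real m * x) ^ m)"
  have "G (2*m) x = (\<Sum>j\<le>m. real j ^ (2*m) / fact j * x ^ j)" unfolding G_def by simp
  also have "\<dots> \<le> (\<Sum>j\<le>m. if j = 0 then 0 else ?M)"
  proof (intro sum_mono)
    fix j assume "j \<in> {..m}"
    then show "real j ^ (2*m) / fact j * x ^ j \<le> (if j = 0 then 0 else ?M)"
      using term_bound[OF x, of j m] m by (auto simp: power_0_left)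
  qed
  also have "\<dots> = (\<Sum>j\<in>{1..m}. ?M)"
    by (rule sum.mono_neutral_cong_right) auto
  also have "\<dots> = real m * ?M" by simp
  finally show ?thesis .
qed

lemma three_four: "real m * 3 ^ (m - 1) \<le> 4 ^ m"
proof (induction m)
  case 0 then show ?case by simp
next
  case (Suc m)
  show ?case
  proof (cases m)
    case 0 then show ?thesis by simp
  next
    case (Suc k)
    have "real (Suc m) * 3 ^ (Suc m - 1) = 3 * (real m * 3 ^ (m - 1)) + 3 ^ m"
      using Suc by (simp add: algebra_simps)
    also have "\<dots> \<le> 3 * 4 ^ m + 4 ^ m"
      using Suc.IH by (intro add_mono power_mono) auto
    finally show ?thesis by simp
  qed
qed

lemma m_le_four: "m \<ge> 1 \<Longrightarrow> real m \<le> 4 ^ (2*m - 1)"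
proof -
  assume m: "m \<ge> 1"
  have "m < 2 ^ m" by (rule less_exp)
  also have "(2::nat) ^ m \<le> 4 ^ m" by (intro power_mono) auto
  also have "(4::nat) ^ m \<le> 4 ^ (2*m - 1)" using m by (intro power_increasing) auto
  finally have "m \<le> 4 ^ (2*m - 1)" by simp
  then show ?thesis by (metis of_nat_le_iff of_nat_numeral of_nat_power)
qed


theorem lemma17:
  fixes p :: real and m n :: nat
  assumes "0 \<le> p" "p \<le> 1" "m \<ge> 1" "n \<ge> 1"
  defines "q \<equiv> 1 - p"
  shows "measure_pmf.expectation (binomial_pmf n p) (\<lambda>X. \<bar>real X - real n * p\<bar> ^ (2 * m))
           \<le> real m * max (real m ^ (2 * m - 1) * real n * p * q)
                             (exp (real m - 1) * (real m * real n * p * q) ^ m)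
         \<and> (\<forall>\<delta>::real. 0 < \<delta> \<and> \<delta> \<le> 1 \<and> real n \<ge> 4 * real m / \<delta> \<longrightarrow>
           measure_pmf.expectation (binomial_pmf n p) (\<lambda>X. \<bar>real X / real n - p\<bar> ^ (2 * m))
           \<le> \<delta> ^ m * (p * q) ^ m + \<delta> ^ (2 * m - 1) * (p * q))"
proof -
  have pI: "p \<in> {0..1}" using assms by simp
  define s where "s = p * q"
  define x where "x = real n * s"
  have s0: "s \<ge> 0" using assms unfolding s_def q_def by simp
  have x0: "x \<ge> 0" using s0 unfolding x_def by simp
  have n0: "real n > 0" using assms by simp
  define A where "A = real m ^ (2 * m - 1) * x"
  define B where "B = exp (real m - 1) * (real m * x) ^ m"
  have E1: "measure_pmf.expectation (binomial_pmf n p) (\<lambda>X. \<bar>real X - real n * p\<bar> ^ (2 * m)) = mom p n (2*m)"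
    unfolding mom_def Em_def expectation_binomial_pmf'[OF pI]
    by (intro sum.cong refl) (simp add: power_even_abs)
  have bound1: "measure_pmf.expectation (binomial_pmf n p) (\<lambda>X. \<bar>real X - real n * p\<bar> ^ (2 * m)) \<le> real m * max A B"
  proof -
    have "mom p n (2*m) \<le> \<bar>mom p n (2*m)\<bar>" by simp
    also have "\<dots> \<le> G (2*m) x" using mom_bound[of p n "2*m"] assms unfolding x_def s_def q_def by simp
    also have "\<dots> \<le> real m * max A B" unfolding A_def B_def using G_final[OF x0 assms(3)] .
    finally show ?thesis using E1 by simp
  qed
  have part1: "real m * max A B = real m * max (real m ^ (2 * m - 1) * real n * p * q)
                             (exp (real m - 1) * (real m * real n * p * q) ^ m)"
    unfolding A_def B_def x_def s_def by (simp add: mult.assoc)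
  have part2: "measure_pmf.expectation (binomial_pmf n p) (\<lambda>X. \<bar>real X / real n - p\<bar> ^ (2 * m))
           \<le> \<delta> ^ m * (p * q) ^ m + \<delta> ^ (2 * m - 1) * (p * q)"
    if d: "0 < \<delta>" "\<delta> \<le> 1" "real n \<ge> 4 * real m / \<delta>" for \<delta> :: real
  proof -
    define N where "N = \<delta> * real n"
    have N: "N \<ge> 4 * real m" using d unfolding N_def by (simp add: field_simps)
    have m1: "real m \<ge> 1" using assms by simp
    have E2: "measure_pmf.expectation (binomial_pmf n p) (\<lambda>X. \<bar>real X / real n - p\<bar> ^ (2 * m))
        = measure_pmf.expectation (binomial_pmf n p) (\<lambda>X. \<bar>real X - real n * p\<bar> ^ (2 * m)) / real n ^ (2*m)"
    proof -
      have "\<bar>real X / real n - p\<bar> ^ (2 * m) = \<bar>real X - real n * p\<bar> ^ (2 * m) / real n ^ (2*m)" for X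
      proof -
        have "real X / real n - p = (real X - real n * p) / real n" using n0 by (simp add: field_simps)
        then show ?thesis using n0 by (simp add: power_divide)
      qed
      then show ?thesis
        unfolding expectation_binomial_pmf'[OF pI] by (simp add: sum_divide_distrib)
    qed
    have "real m * max A B \<le> real m * A + real m * B"
      using s0 x0 m1 unfolding A_def B_def by (auto simp: max_def)
    hence "measure_pmf.expectation (binomial_pmf n p) (\<lambda>X. \<bar>real X / real n - p\<bar> ^ (2 * m))
        \<le> (real m * A) / real n ^ (2*m) + (real m * B) / real n ^ (2*m)"
      unfolding E2 using bound1 n0 by (simp add: add_divide_distrib[symmetric] divide_right_mono)
    also have "(real m * A) / real n ^ (2*m) \<le> \<delta> ^ (2 * m - 1) * (p * q)"
    proof -
      have d2: "2*m = Suc (2*m - 1)" using assms by simp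
      have "real m * real m ^ (2*m - 1) \<le> 4 ^ (2*m - 1) * real m ^ (2*m - 1)"
        using m_le_four[OF assms(3)] by (intro mult_right_mono) auto
      also have "\<dots> = (4 * real m) ^ (2*m - 1)" by (simp add: power_mult_distrib)
      also have "\<dots> \<le> N ^ (2*m - 1)" using N m1 by (intro power_mono) auto
      finally have key: "real m * real m ^ (2*m - 1) \<le> N ^ (2*m - 1)" .
      have "(real m * A) / real n ^ (2*m) = (real m * real m ^ (2*m - 1)) * s / real n ^ (2*m - 1)"
        unfolding A_def x_def using n0 by (subst d2) (simp add: field_simps)
      also have "\<dots> \<le> N ^ (2*m - 1) * s / real n ^ (2*m - 1)"
        using key s0 n0 by (intro divide_right_mono mult_right_mono) auto
      also have "\<dots> = \<delta> ^ (2 * m - 1) * s"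
        unfolding N_def using n0 by (simp add: power_mult_distrib)
      finally show ?thesis unfolding s_def .
    qed
    also have "(real m * B) / real n ^ (2*m) \<le> \<delta> ^ m * (p * q) ^ m"
    proof -
      have e: "exp (real m - 1) \<le> 3 ^ (m - 1)"
      proof -
        have "exp (real m - 1) = exp 1 ^ (m - 1)" using assms by (simp add: exp_of_nat_mult[symmetric] of_nat_diff)
        also have "\<dots> \<le> 3 ^ (m - 1)" using exp_le by (intro power_mono) auto
        finally show ?thesis .
      qed
      have "real m * exp (real m - 1) * real m ^ m \<le> real m * 3 ^ (m - 1) * real m ^ m"
        using e m1 by (intro mult_right_mono mult_left_mono) auto
      also have "\<dots> \<le> 4 ^ m * real m ^ m" using three_four[of m] by (intro mult_right_mono) auto
      also have "\<dots> = (4 * real m) ^ m" by (simp add: power_mult_distrib)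
      also have "\<dots> \<le> N ^ m" using N m1 by (intro power_mono) auto
      finally have key: "real m * exp (real m - 1) * real m ^ m \<le> N ^ m" .
      have d2: "real n ^ (2*m) = real n ^ m * real n ^ m" by (simp add: mult_2 power_add)
      have "(real m * B) / real n ^ (2*m) = (real m * exp (real m - 1) * real m ^ m) * s ^ m / real n ^ m"
        unfolding B_def x_def d2 using n0 by (simp add: power_mult_distrib field_simps)
      also have "\<dots> \<le> N ^ m * s ^ m / real n ^ m"
        using key s0 n0 by (intro divide_right_mono mult_right_mono) auto
      also have "\<dots> = \<delta> ^ m * s ^ m"
        unfolding N_def using n0 by (simp add: power_mult_distrib)
      finally show ?thesis unfolding s_def .
    qed
    finally show ?thesis by simp
  qed
  show ?thesis using bound1 part1 part2 by auto
qed

end
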